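(* Let $n\ge4$ and let $Z^*$ be a nonzero $2$-cocycle over $[n]$. Then the facet graph $G_2(Z^* )$ is $2$-connected.
   Context: Fix a field $\mathbb F$. A $j$-simplex is a $(j+1)$-element subset of $[n]$ oriented by increasing order. For a simplex $\rho$ and $\tau=\rho\setminus\{p\}$ with $p$ the $i$-th smallest element of $\rho$, $\mathrm{sign}(\rho,\tau)=(-1)^{i-1}$. A $2$-cochain is a formal $\mathbb F$-combination of $2$-simplices; the coboundary is $\delta\tau=\sum_{p\in[n]\setminus\tau}\mathrm{sign}(\tau\cup\{p\},\tau)(\tau\cup\{p\})$, extended linearly. A $2$-cocycle is a $2$-cochain $Z$ with $\delta Z=0$. The facet graph $G_2(Z^* )$ has vertex set $\mathrm{Supp}(Z^* )$ (simplices with nonzero coefficient), two $2$-simplices adjacent iff they share an edge. A graph is $k$-connected if deleting any set of fewer than $k$ of its vertices leaves a nonempty connected graph. *)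

theory Defs
  imports Main
begin

definition simplex :: "nat \<Rightarrow> nat \<Rightarrow> nat set \<Rightarrow> bool" where
  "simplex n j s \<longleftrightarrow> s \<subseteq> {1..n} \<and> card s = j + 1"

text \<open>sign(rho, rho - {p}) = (-1)^(i-1) where p is the i-th smallest element of rho,
  i.e. i - 1 = number of elements of rho smaller than p.\<close>
definition simp_sign :: "nat set \<Rightarrow> nat \<Rightarrow> 'a::field" where
  "simp_sign rho p = (-1) ^ card {q \<in> rho. q < p}"

definition cochain2 :: "nat \<Rightarrow> (nat set \<Rightarrow> 'a::field) \<Rightarrow> bool" where
  "cochain2 n Z \<longleftrightarrow> (\<forall>s. \<not> simplex n 2 s \<longrightarrow> Z s = 0)"

text \<open>Coefficient of rho in the coboundary of the simplex tau
  (delta tau = sum over p in [n] - tau of sign(tau + p, tau) (tau + p)).\<close>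
definition cobdry_coeff :: "nat \<Rightarrow> nat set \<Rightarrow> nat set \<Rightarrow> 'a::field" where
  "cobdry_coeff n tau rho =
     (if \<exists>p \<in> {1..n} - tau. rho = insert p tau
      then simp_sign rho (THE p. p \<in> {1..n} - tau \<and> rho = insert p tau) else 0)"

definition cobdry2 :: "nat \<Rightarrow> (nat set \<Rightarrow> 'a::field) \<Rightarrow> nat set \<Rightarrow> 'a" where
  "cobdry2 n Z rho = (\<Sum>tau \<in> {t. simplex n 2 t}. Z tau * cobdry_coeff n tau rho)"

definition cocycle2 :: "nat \<Rightarrow> (nat set \<Rightarrow> 'a::field) \<Rightarrow> bool" where
  "cocycle2 n Z \<longleftrightarrow> cochain2 n Z \<and> (\<forall>rho. cobdry2 n Z rho = 0)"

definition supp :: "nat \<Rightarrow> (nat set \<Rightarrow> 'a::field) \<Rightarrow> nat set set" where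
  "supp n Z = {s. simplex n 2 s \<and> Z s \<noteq> 0}"

definition facet_adj :: "nat set \<Rightarrow> nat set \<Rightarrow> bool" where
  "facet_adj s t \<longleftrightarrow> s \<noteq> t \<and> card (s \<inter> t) = 2"

definition graph_connected :: "'v set \<Rightarrow> ('v \<Rightarrow> 'v \<Rightarrow> bool) \<Rightarrow> bool" where
  "graph_connected V E \<longleftrightarrow> V \<noteq> {} \<and>
     (\<forall>u \<in> V. \<forall>v \<in> V. (u, v) \<in> {(x, y). x \<in> V \<and> y \<in> V \<and> E x y}\<^sup>*)"

definition k_connected :: "nat \<Rightarrow> 'v set \<Rightarrow> ('v \<Rightarrow> 'v \<Rightarrow> bool) \<Rightarrow> bool" where
  "k_connected k V E \<longleftrightarrow>
     (\<forall>S \<subseteq> V. card S < k \<longrightarrow> graph_connected (V - S) E)"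

end

theory Submission
  imports Defs
begin

lemma two_elems: "finite A \<Longrightarrow> a \<in> A \<Longrightarrow> b \<in> A \<Longrightarrow> a \<noteq> b \<Longrightarrow> 2 \<le> card A"
proof -
  assume "finite A" "a \<in> A" "b \<in> A" "a \<noteq> b"
  hence "card {a,b} \<le> card A" by (intro card_mono) auto
  thus ?thesis using \<open>a \<noteq> b\<close> by simp
qed

lemma four:
  assumes "finite s" "card s = 3" "u \<subseteq> insert p s" "v \<subseteq> insert p s" "card u = 3" "card v = 3"
  shows "2 \<le> card (u \<inter> v)"
proof -
  have fu: "finite u" "finite v" using assms finite_subset by (metis finite_insert)+
  have "card (u \<union> v) \<le> card (insert p s)" using assms by (intro card_mono) auto
  also have "\<dots> \<le> 4" using assms by (simp add: card_insert_if)
  finally have "card (u \<union> v) \<le> 4" .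
  moreover have "card u + card v = card (u \<union> v) + card (u \<inter> v)"
    using fu card_Un_Int by blast
  ultimately show ?thesis using assms by simp
qed

lemma new:
  assumes "finite s" "card s = 3" "card u = 3" "u \<subseteq> insert p s" "u \<noteq> s"
  shows "p \<in> u"
proof (rule ccontr)
  assume "p \<notin> u"
  hence "u \<subseteq> s" using assms by blast
  hence "u = s" using assms card_subset_eq by metis
  thus False using assms by simp
qed

lemma out:
  assumes "finite t" "card t = 3" "finite x" "card x = 3" "2 \<le> card (t \<inter> x)" "t \<noteq> x"
  shows "\<exists>q\<in>t - x. t \<subseteq> insert q x"
proof -
  have "t - x \<noteq> {}"
  proof
    assume "t - x = {}"
    hence "t \<subseteq> x" by blast
    hence "t = x" using assms card_subset_eq by metis
    thus False using assms by simp
  qed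
  then obtain q where q: "q \<in> t - x" by blast
  have c: "card (t - x) \<le> 1"
    using assms card_Diff_subset_Int[of t x] by simp
  have "\<forall>y\<in>t - x. y = q"
  proof
    fix y assume "y \<in> t - x"
    show "y = q"
    proof (rule ccontr)
      assume "y \<noteq> q"
      hence "2 \<le> card (t - x)" using two_elems[of "t - x" y q] q \<open>y \<in> t - x\<close> assms by auto
      thus False using c by simp
    qed
  qed
  thus ?thesis using q by blast
qed

lemma K:
  fixes W1 W2 :: "nat set set"
  assumes T1: "\<forall>s\<in>W1. s \<subseteq> {1..n} \<and> card s = 3" and T2: "\<forall>s\<in>W2. s \<subseteq> {1..n} \<and> card s = 3"
    and C1: "\<forall>s\<in>W1. \<forall>p\<in>{1..n}-s. \<exists>u\<in>W1. u\<noteq>s \<and> u \<subseteq> insert p s"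
    and C2: "\<forall>s\<in>W2. \<forall>p\<in>{1..n}-s. \<exists>u\<in>W2. u\<noteq>s \<and> u \<subseteq> insert p s"
    and s0: "s0 \<in> W1" and t0: "t0 \<in> W2"
  shows "\<exists>u\<in>W1. \<exists>v\<in>W2. 2 \<le> card (u \<inter> v)"
proof (rule ccontr)
  assume H: "\<not> ?thesis"
  hence H': "\<And>u v. u\<in>W1 \<Longrightarrow> v\<in>W2 \<Longrightarrow> card (u \<inter> v) \<le> 1" by fastforce
  have fin: "\<And>s. s \<in> W1 \<union> W2 \<Longrightarrow> finite s \<and> card s = 3 \<and> s \<subseteq> {1..n}"
    using T1 T2 by (meson UnE finite_atLeastAtMost finite_subset)
  have "\<exists>s\<in>W1. \<exists>t\<in>W2. s \<inter> t \<noteq> {}"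
  proof (cases "s0 \<inter> t0 = {}")
    case False thus ?thesis using s0 t0 by blast
  next
    case True
    have "card t0 = 3" "t0 \<subseteq> {1..n}" using fin t0 by auto
    then obtain p where p: "p \<in> t0" by fastforce
    with True have "p \<notin> s0" by blast
    hence "p \<in> {1..n} - s0" using p \<open>t0 \<subseteq> {1..n}\<close> by blast
    then obtain u where u: "u\<in>W1" "u\<noteq>s0" "u \<subseteq> insert p s0" using C1 s0 by blast
    have "p \<in> u" using new[of s0 u p] u fin s0 by auto
    thus ?thesis using u t0 p by blast
  qed
  then obtain s t where st: "s\<in>W1" "t\<in>W2" "s\<inter>t \<noteq> {}" by blast
  have fs: "finite s" "card s = 3" "s \<subseteq> {1..n}" using fin st by auto
  have ft: "finite t" "card t = 3" "t \<subseteq> {1..n}" using fin st by auto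
  obtain a where a: "a \<in> s \<inter> t" using st by blast
  have sta: "s \<inter> t = {a}"
  proof -
    have "\<forall>y\<in>s\<inter>t. y = a"
    proof
      fix y assume y: "y \<in> s \<inter> t"
      show "y = a"
      proof (rule ccontr)
        assume "y \<noteq> a"
        hence "2 \<le> card (s \<inter> t)" using two_elems[of "s \<inter> t" y a] y a fs by auto
        thus False using H'[OF st(1,2)] by simp
      qed
    qed
    thus ?thesis using a by blast
  qed
  have "card (t - {a}) = 2" using ft a by (simp add: card_Diff_singleton)
  hence "t - {a} \<noteq> {}" by (metis card.empty zero_neq_numeral)
  then obtain d where d: "d \<in> t" "d \<noteq> a" by blast
  have dns: "d \<notin> s" using sta d by blast
  hence "d \<in> {1..n} - s" using d ft by blast
  then obtain s' where s': "s'\<in>W1" "s'\<noteq>s" "s' \<subseteq> insert d s" using C1 st by blast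
  have fs': "finite s'" "card s' = 3" using fin s' by auto
  have ds': "d \<in> s'" using new[of s s' d] fs fs' s' by auto
  have "a \<notin> s'"
  proof
    assume "a \<in> s'"
    hence "2 \<le> card (s' \<inter> t)" using two_elems[of "s' \<inter> t" a d] ds' d a fs' by auto
    thus False using H'[OF s'(1) st(2)] by simp
  qed
  hence sub: "s' \<subseteq> insert d (s - {a})" using s' by blast
  have "card (insert d (s - {a})) = 3" using fs a dns by (simp add: card_Diff_singleton)
  hence s'eq: "s' = insert d (s - {a})" using sub fs' card_subset_eq
    by (metis finite_Diff finite_insert fs(1))
  have "card (s - {a}) = 2" using fs a by (simp add: card_Diff_singleton)
  hence "s - {a} \<noteq> {}" by (metis card.empty zero_neq_numeral)
  then obtain b where b: "b \<in> s" "b \<noteq> a" by blast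
  have bnt: "b \<notin> t" using sta b by blast
  have bs': "b \<in> s'" using s'eq b by blast
  have "b \<in> {1..n} - t" using bnt b fs by blast
  then obtain t' where t': "t'\<in>W2" "t'\<noteq>t" "t' \<subseteq> insert b t" using C2 st by blast
  have ft': "finite t'" "card t' = 3" using fin t' by auto
  have bt': "b \<in> t'" using new[of t t' b] ft ft' t' by auto
  have "d \<notin> t'"
  proof
    assume "d \<in> t'"
    hence "2 \<le> card (s' \<inter> t')" using two_elems[of "s' \<inter> t'" b d] ds' bs' bt' b dns fs' by auto
    thus False using H'[OF s'(1) t'(1)] by simp
  qed
  hence sub2: "t' \<subseteq> insert b (t - {d})" using t' by blast
  have "card (insert b (t - {d})) = 3" using ft d bnt by (simp add: card_Diff_singleton)
  hence t'eq: "t' = insert b (t - {d})" using sub2 ft' card_subset_eq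
    by (metis finite_Diff finite_insert ft(1))
  have "a \<in> t'" using t'eq a d by blast
  hence "2 \<le> card (s \<inter> t')" using two_elems[of "s \<inter> t'" a b] a b bt' fs by auto
  thus False using H'[OF st(1) t'(1)] by simp
qed


lemma half:
  fixes X A B :: "nat set set"
  assumes TX: "\<forall>s\<in>X. s \<subseteq> {1..n} \<and> card s = 3"
    and CX: "\<forall>s\<in>X. \<forall>p\<in>{1..n}-s. \<exists>u\<in>X. u\<noteq>s \<and> u \<subseteq> insert p s"
    and x: "x \<in> X" and AB: "A \<union> B = X - {x}" "A \<inter> B = {}" "B \<noteq> {}"
    and sep: "\<forall>a\<in>A. \<forall>b\<in>B. card (a \<inter> b) \<le> 1"
    and PB: "\<forall>q\<in>{1..n}-x. \<forall>v\<in>B. \<not> v \<subseteq> insert q x"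
  shows False
proof -
  have fin: "\<And>s. s \<in> X \<Longrightarrow> finite s \<and> card s = 3 \<and> s \<subseteq> {1..n}"
    using TX by (meson finite_atLeastAtMost finite_subset)
  have xB: "x \<notin> B" using AB by blast
  have outB: False if v: "v \<in> B" and c: "2 \<le> card (v \<inter> x)" for v
  proof -
    have "v \<in> X" using v AB by blast
    then obtain q where q: "q \<in> v - x" "v \<subseteq> insert q x"
      using out[of v x] fin[OF \<open>v \<in> X\<close>] fin[OF x] c v xB by blast
    have "q \<in> {1..n} - x" using q fin \<open>v \<in> X\<close> by blast
    thus False using PB q v by blast
  qed
  have T1: "\<forall>s\<in>insert x A. s \<subseteq> {1..n} \<and> card s = 3" using fin x AB by blast
  have T2: "\<forall>s\<in>B. s \<subseteq> {1..n} \<and> card s = 3" using fin AB by blast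
  have C1: "\<forall>s\<in>insert x A. \<forall>p\<in>{1..n}-s. \<exists>u\<in>insert x A. u\<noteq>s \<and> u \<subseteq> insert p s"
  proof (intro ballI)
    fix s p assume s: "s \<in> insert x A" and p: "p \<in> {1..n} - s"
    have sX: "s \<in> X" using s x AB by blast
    then obtain u where u: "u\<in>X" "u\<noteq>s" "u \<subseteq> insert p s" using CX p by blast
    show "\<exists>u\<in>insert x A. u\<noteq>s \<and> u \<subseteq> insert p s"
    proof (cases "s = x")
      case True
      have "u \<notin> B" using PB u p True by blast
      hence "u \<in> A" using u AB True by blast
      thus ?thesis using u by blast
    next
      case False
      hence sA: "s \<in> A" using s by blast
      have "2 \<le> card (s \<inter> u)" using four[of s s p u] fin sX u by auto
      hence "u \<notin> B" using sep sA by fastforce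
      hence "u \<in> insert x A" using u AB by blast
      thus ?thesis using u by blast
    qed
  qed
  have C2: "\<forall>s\<in>B. \<forall>p\<in>{1..n}-s. \<exists>u\<in>B. u\<noteq>s \<and> u \<subseteq> insert p s"
  proof (intro ballI)
    fix s p assume s: "s \<in> B" and p: "p \<in> {1..n} - s"
    have sX: "s \<in> X" using s AB by blast
    then obtain u where u: "u\<in>X" "u\<noteq>s" "u \<subseteq> insert p s" using CX p by blast
    have c: "2 \<le> card (s \<inter> u)" using four[of s s p u] fin sX u by auto
    have "u \<noteq> x" using outB[OF s] c by blast
    moreover have "u \<notin> A"
    proof
      assume "u \<in> A"
      hence "card (u \<inter> s) \<le> 1" using sep s by blast
      moreover have "u \<inter> s = s \<inter> u" by blast
      ultimately show False using c by simp
    qed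
    ultimately have "u \<in> B" using u AB by blast
    thus "\<exists>u\<in>B. u\<noteq>s \<and> u \<subseteq> insert p s" using u by blast
  qed
  obtain t0 where t0: "t0 \<in> B" using AB by blast
  obtain u v where uv: "u \<in> insert x A" "v \<in> B" "2 \<le> card (u \<inter> v)"
    using K[OF T1 T2 C1 C2 insertI1 t0] by blast
  show False
  proof (cases "u = x")
    case True thus False using outB[OF uv(2)] uv by (simp add: Int_commute)
  next
    case False thus False using sep uv by fastforce
  qed
qed

lemma comb:
  fixes X A B :: "nat set set"
  assumes TX: "\<forall>s\<in>X. s \<subseteq> {1..n} \<and> card s = 3"
    and CX: "\<forall>s\<in>X. \<forall>p\<in>{1..n}-s. \<exists>u\<in>X. u\<noteq>s \<and> u \<subseteq> insert p s"
    and S: "S = {} \<or> (\<exists>x\<in>X. S = {x})"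
    and AB: "A \<union> B = X - S" "A \<inter> B = {}" "A \<noteq> {}" "B \<noteq> {}"
    and sep: "\<forall>a\<in>A. \<forall>b\<in>B. card (a \<inter> b) \<le> 1"
  shows False
proof -
  have fin: "\<And>s. s \<in> X \<Longrightarrow> finite s \<and> card s = 3 \<and> s \<subseteq> {1..n}"
    using TX by (meson finite_atLeastAtMost finite_subset)
  have CX': "\<And>s p. s \<in> X \<Longrightarrow> p \<in> {1..n} - s \<Longrightarrow> \<exists>u\<in>X. u \<noteq> s \<and> u \<subseteq> insert p s"
    using CX by blast
  have sep': "\<forall>a\<in>B. \<forall>b\<in>A. card (a \<inter> b) \<le> 1"
  proof (intro ballI)
    fix a b assume "a \<in> B" "b \<in> A"
    moreover have "a \<inter> b = b \<inter> a" by blast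
    ultimately show "card (a \<inter> b) \<le> 1" using sep by simp
  qed
  have sepAB: "\<And>a b. a \<in> A \<Longrightarrow> b \<in> B \<Longrightarrow> 2 \<le> card (a \<inter> b) \<Longrightarrow> False"
  proof -
    fix a b assume "a \<in> A" "b \<in> B" "2 \<le> card (a \<inter> b)"
    moreover have "card (a \<inter> b) \<le> 1" using sep \<open>a \<in> A\<close> \<open>b \<in> B\<close> by blast
    ultimately show False by simp
  qed
  show False
  proof (cases "S = {}")
    case True
    have AX: "A \<subseteq> X" "B \<subseteq> X" using AB True by blast+
    have T1: "\<forall>s\<in>A. s \<subseteq> {1..n} \<and> card s = 3" using TX AX by blast
    have T2: "\<forall>s\<in>B. s \<subseteq> {1..n} \<and> card s = 3" using TX AX by blast
    have C: "\<forall>s\<in>P. \<forall>p\<in>{1..n}-s. \<exists>u\<in>P. u\<noteq>s \<and> u \<subseteq> insert p s"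
      if PQ: "P \<union> Q = X" "\<forall>a\<in>P. \<forall>b\<in>Q. card (a \<inter> b) \<le> 1" for P Q
    proof (intro ballI)
      fix s p assume s: "s \<in> P" and p: "p \<in> {1..n} - s"
      have sX: "s \<in> X" using s PQ by blast
      then obtain u where u: "u\<in>X" "u\<noteq>s" "u \<subseteq> insert p s" using CX p by blast
      have c: "2 \<le> card (s \<inter> u)" using four[of s s p u] fin sX u by auto
      have "u \<notin> Q"
      proof
        assume "u \<in> Q"
        hence "card (s \<inter> u) \<le> 1" using PQ(2) s by blast
        thus False using c by simp
      qed
      thus "\<exists>u\<in>P. u\<noteq>s \<and> u \<subseteq> insert p s" using u PQ by blast
    qed
    have e1: "A \<union> B = X" using AB True by simp
    have e2: "B \<union> A = X" using AB True by (simp add: Un_commute)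
    have C1: "\<forall>s\<in>A. \<forall>p\<in>{1..n}-s. \<exists>u\<in>A. u\<noteq>s \<and> u \<subseteq> insert p s"
      using C[OF e1 sep] .
    have C2: "\<forall>s\<in>B. \<forall>p\<in>{1..n}-s. \<exists>u\<in>B. u\<noteq>s \<and> u \<subseteq> insert p s"
      using C[OF e2 sep'] .
    obtain s0 t0 where "s0 \<in> A" "t0 \<in> B" using AB by blast
    then obtain u v where "u \<in> A" "v \<in> B" "2 \<le> card (u \<inter> v)"
      using K[OF T1 T2 C1 C2] by blast
    thus False using sepAB by blast
  next
    case False
    then obtain x where x: "x \<in> X" "S = {x}" using S by blast
    show False
    proof (cases "\<forall>q\<in>{1..n}-x. \<forall>v\<in>B. \<not> v \<subseteq> insert q x")
      case True
      have e: "A \<union> B = X - {x}" using AB x by simp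
      show False using half[OF TX CX x(1) e AB(2,4) sep True] .
    next
      case nB: False
      show False
      proof (cases "\<forall>q\<in>{1..n}-x. \<forall>v\<in>A. \<not> v \<subseteq> insert q x")
        case True
        have e: "B \<union> A = X - {x}" using AB x by (simp add: Un_commute)
        have e': "B \<inter> A = {}" using AB by (simp add: Int_commute)
        show False using half[OF TX CX x(1) e e' AB(3) sep' True] .
      next
        case nA: False
        have "\<exists>q\<in>{1..n}-x. \<exists>v\<in>B. v \<subseteq> insert q x" using nB by simp
        then obtain q where q: "q \<in> {1..n} - x" and qv0: "\<exists>v\<in>B. v \<subseteq> insert q x" by (rule bexE)
        from qv0 obtain v where v: "v \<in> B" "v \<subseteq> insert q x" by (rule bexE)
        have "\<exists>p\<in>{1..n}-x. \<exists>u\<in>A. u \<subseteq> insert p x" using nA by simp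
        then obtain p where p: "p \<in> {1..n} - x" and pu0: "\<exists>u\<in>A. u \<subseteq> insert p x" by (rule bexE)
        from pu0 obtain u where u: "u \<in> A" "u \<subseteq> insert p x" by (rule bexE)
        have fx: "finite x" "card x = 3" using fin x by auto
        have "A \<subseteq> X - {x}" "B \<subseteq> X - {x}" using AB(1) x(2) by blast+
        hence uX: "u \<in> X" "u \<noteq> x" and vX: "v \<in> X" "v \<noteq> x" using u(1) v(1) by blast+
        have fu: "finite u" "card u = 3" "u \<subseteq> {1..n}" using fin uX by auto
        have fv: "finite v" "card v = 3" "v \<subseteq> {1..n}" using fin vX by auto
        have pu: "p \<in> u" using new[of x u p] fx fu u uX by auto
        have qv: "q \<in> v" using new[of x v q] fx fv v vX by auto
        have pq: "p \<noteq> q"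
        proof
          assume "p = q"
          hence "v \<subseteq> insert p x" using v by simp
          hence "2 \<le> card (u \<inter> v)" using four[of x u p v] fx fu fv u by simp
          thus False using sepAB u v by blast
        qed
        have "q \<notin> u" using q u(2) pq by auto
        hence "q \<in> {1..n} - u" using q by simp
        from CX'[OF uX(1) this] obtain w where w: "w\<in>X" "w\<noteq>u" "w \<subseteq> insert q u" by blast
        have fw: "finite w" "card w = 3" using fin w by auto
        have qw: "q \<in> w" using new[of u w q] fu fw w by auto
        have "2 \<le> card (u \<inter> w)" using four[of u u q w] fu fw w by auto
        moreover have "w \<noteq> x" using qw q by blast
        have "w \<notin> B" using sepAB[OF u(1)] \<open>2 \<le> card (u \<inter> w)\<close> by blast
        moreover have "w \<in> A \<union> B" using \<open>w \<noteq> x\<close> w(1) AB(1) x(2) by blast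
        ultimately have wA: "w \<in> A" by blast
        have "p \<notin> v" using p v(2) pq by auto
        hence "p \<in> {1..n} - v" using p by simp
        from CX'[OF vX(1) this] obtain w' where w': "w'\<in>X" "w'\<noteq>v" "w' \<subseteq> insert p v" by blast
        have fw': "finite w'" "card w' = 3" using fin w' by auto
        have pw': "p \<in> w'" using new[of v w' p] fv fw' w' by auto
        have "2 \<le> card (v \<inter> w')" using four[of v v p w'] fv fw' w' by auto
        moreover have "w' \<noteq> x" using pw' p by blast
        have "v \<inter> w' = w' \<inter> v" by blast
        hence "w' \<notin> A" using sepAB[OF _ v(1)] \<open>2 \<le> card (v \<inter> w')\<close> by auto
        moreover have "w' \<in> A \<union> B" using \<open>w' \<noteq> x\<close> w'(1) AB(1) x(2) by blast
        ultimately have w'B: "w' \<in> B" by blast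
        have pw: "p \<in> w"
        proof (rule ccontr)
          assume "p \<notin> w"
          hence "w \<subseteq> insert q x" using w u by blast
          hence "2 \<le> card (w \<inter> v)" using four[of x w q v] fx fw fv v by auto
          thus False using sepAB wA v by blast
        qed
        have qw': "q \<in> w'"
        proof (rule ccontr)
          assume "q \<notin> w'"
          hence "w' \<subseteq> insert p x" using w' v by blast
          hence "2 \<le> card (u \<inter> w')" using four[of x u p w'] fx fw' fu u by auto
          thus False using sepAB u w'B by blast
        qed
        have "2 \<le> card (w \<inter> w')" using two_elems[of "w \<inter> w'" p q] pw pw' qw qw' pq fw by auto
        thus False using sepAB wA w'B by blast
      qed
    qed
  qed
qed


lemma loc_supp:
  fixes Z :: "nat set \<Rightarrow> 'a::field"
  assumes cz: "cocycle2 n Z" and s: "s \<in> supp n Z" and p: "p \<in> {1..n} - s"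
  shows "\<exists>u \<in> supp n Z. u \<noteq> s \<and> u \<subseteq> insert p s"
proof (rule ccontr)
  assume H: "\<not> ?thesis"
  let ?r = "insert p s"
  let ?T = "{t. simplex n 2 t}"
  have finT: "finite ?T" by (rule finite_subset[of _ "Pow {1..n}"]) (auto simp: simplex_def)
  have sT: "s \<in> ?T" and zs: "Z s \<noteq> 0" using s by (auto simp: supp_def)
  have zero: "\<forall>t\<in>?T - {s}. Z t * cobdry_coeff n t ?r = 0"
  proof
    fix t assume t: "t \<in> ?T - {s}"
    show "Z t * cobdry_coeff n t ?r = 0"
    proof (cases "Z t = 0")
      case True thus ?thesis by simp
    next
      case False
      hence "t \<in> supp n Z" using t by (simp add: supp_def)
      hence "\<not> t \<subseteq> ?r" using H t by blast
      hence "\<not> (\<exists>q\<in>{1..n} - t. ?r = insert q t)" by blast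
      thus ?thesis by (simp add: cobdry_coeff_def)
    qed
  qed
  have "cobdry2 n Z ?r = Z s * cobdry_coeff n s ?r + (\<Sum>t\<in>?T - {s}. Z t * cobdry_coeff n t ?r)"
    unfolding cobdry2_def by (rule sum.remove[OF finT sT])
  also have "(\<Sum>t\<in>?T - {s}. Z t * cobdry_coeff n t ?r) = 0"
    using zero by (rule sum.neutral)
  finally have eq: "cobdry2 n Z ?r = Z s * cobdry_coeff n s ?r" by simp
  have the: "(THE q. q \<in> {1..n} - s \<and> ?r = insert q s) = p"
  proof (rule the_equality)
    show "p \<in> {1..n} - s \<and> ?r = insert p s" using p by simp
  next
    fix q assume q: "q \<in> {1..n} - s \<and> ?r = insert q s"
    hence "q \<in> insert p s" by blast
    thus "q = p" using q by blast
  qed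
  have "cobdry_coeff n s ?r = simp_sign ?r p" using p the unfolding cobdry_coeff_def by auto
  moreover have "simp_sign ?r p \<noteq> (0::'a)" unfolding simp_sign_def by simp
  ultimately have "cobdry2 n Z ?r \<noteq> 0" using eq zs by (metis mult_eq_0_iff)
  thus False using cz by (simp add: cocycle2_def)
qed

theorem theorem4p8:
  fixes Z :: "nat set \<Rightarrow> 'a::field" and n :: nat
  assumes "n \<ge> 4"
    and "cocycle2 n Z"
    and "\<exists>s. Z s \<noteq> 0"
  shows "k_connected 2 (supp n Z) facet_adj"
proof -
  let ?X = "supp n Z"
  have TX: "\<forall>s\<in>?X. s \<subseteq> {1..n} \<and> card s = 3" by (auto simp: supp_def simplex_def)
  have CX: "\<forall>s\<in>?X. \<forall>p\<in>{1..n}-s. \<exists>u\<in>?X. u\<noteq>s \<and> u \<subseteq> insert p s"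
  proof (intro ballI)
    fix s p assume "s \<in> ?X" "p \<in> {1..n} - s"
    thus "\<exists>u\<in>?X. u\<noteq>s \<and> u \<subseteq> insert p s" by (rule loc_supp[OF assms(2)])
  qed
  have finX: "finite ?X" by (rule finite_subset[of _ "Pow {1..n}"]) (auto simp: supp_def simplex_def)
  have fin: "\<And>s. s \<in> ?X \<Longrightarrow> finite s \<and> card s = 3 \<and> s \<subseteq> {1..n}"
    using TX by (meson finite_atLeastAtMost finite_subset)
  obtain s0 where "Z s0 \<noteq> 0" using assms(3) by blast
  hence s0: "s0 \<in> ?X" using assms(2) by (auto simp: supp_def cocycle2_def cochain2_def)
  have two: "\<exists>y\<in>?X. y \<noteq> x" if x: "x \<in> ?X" for x
  proof -
    have fx: "finite x" "card x = 3" "x \<subseteq> {1..n}" using fin x by auto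
    have cd: "card ({1..n} - x) = n - 3" using fx by (simp add: card_Diff_subset)
    have "{1..n} - x \<noteq> {}"
    proof
      assume "{1..n} - x = {}"
      hence "card ({1..n} - x) = 0" by (simp only: card.empty)
      thus False using cd assms(1) by linarith
    qed
    then obtain p where "p \<in> {1..n} - x" by blast
    from loc_supp[OF assms(2) x this] obtain y where "y \<in> ?X" "y \<noteq> x" by blast
    thus ?thesis by blast
  qed
  show ?thesis unfolding k_connected_def
  proof (intro allI impI)
    fix S assume SX: "S \<subseteq> ?X" and cS: "card S < 2"
    have finS: "finite S" using SX finX finite_subset by blast
    have Sc: "S = {} \<or> (\<exists>x\<in>?X. S = {x})"
    proof (cases "card S = 0")
      case True thus ?thesis using finS by simp
    next
      case False
      hence "card S = 1" using cS by simp
      then obtain x where "S = {x}" by (rule card_1_singletonE)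
      thus ?thesis using SX by blast
    qed
    let ?R = "{(x,y). x \<in> ?X - S \<and> y \<in> ?X - S \<and> facet_adj x y}"
    show "graph_connected (?X - S) facet_adj"
      unfolding graph_connected_def
    proof (intro conjI ballI)
      show "?X - S \<noteq> {}"
      proof (cases "S = {}")
        case True thus ?thesis using s0 by blast
      next
        case False
        then obtain x where x: "x \<in> ?X" "S = {x}" using Sc by blast
        thus ?thesis using two[OF x(1)] by blast
      qed
    next
      fix u v assume u: "u \<in> ?X - S" and v: "v \<in> ?X - S"
      define A where "A = {w \<in> ?X - S. (u,w) \<in> ?R\<^sup>*}"
      define B where "B = (?X - S) - A"
      show "(u,v) \<in> ?R\<^sup>*"
      proof (rule ccontr)
        assume nv: "(u,v) \<notin> ?R\<^sup>*"
        have vB: "v \<in> B" using v nv by (simp add: A_def B_def)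
        have uA: "u \<in> A" using u by (simp add: A_def)
        have sep: "\<forall>a\<in>A. \<forall>b\<in>B. card (a \<inter> b) \<le> 1"
        proof (intro ballI, rule ccontr)
          fix a b assume a: "a \<in> A" and b: "b \<in> B" and c: "\<not> card (a \<inter> b) \<le> 1"
          have ab: "a \<noteq> b" using a b by (auto simp: B_def)
          have aX: "a \<in> ?X - S" using a by (simp add: A_def)
          have bX: "b \<in> ?X - S" using b by (simp add: B_def)
          have fa: "finite a" "card a = 3" using fin aX by auto
          have fb: "finite b" "card b = 3" using fin bX by auto
          have "card (a \<inter> b) \<le> 3" using card_mono[OF fa(1) Int_lower1[of a b]] fa by simp
          moreover have "card (a \<inter> b) \<noteq> 3"
          proof
            assume h: "card (a \<inter> b) = 3"
            have "a \<inter> b = a" using card_subset_eq[OF fa(1) Int_lower1[of a b]] h fa by simp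
            moreover have "a \<inter> b = b" using card_subset_eq[OF fb(1) Int_lower2[of a b]] h fb by simp
            ultimately show False using ab by simp
          qed
          ultimately have "card (a \<inter> b) = 2" using c by simp
          hence "facet_adj a b" using ab by (simp add: facet_adj_def)
          hence r1: "(a,b) \<in> ?R" using aX bX by simp
          have r2: "(u,a) \<in> ?R\<^sup>*" using a by (simp add: A_def)
          have "(u,b) \<in> ?R\<^sup>*" by (rule rtrancl.rtrancl_into_rtrancl[OF r2 r1])
          hence "b \<in> A" using bX by (simp add: A_def)
          thus False using b by (simp add: B_def)
        qed
        have AB1: "A \<union> B = ?X - S" by (auto simp: A_def B_def)
        have AB2: "A \<inter> B = {}" by (auto simp: B_def)
        have "A \<noteq> {}" "B \<noteq> {}" using uA vB by blast+
        thus False using comb[OF TX CX Sc AB1 AB2 _ _ sep] by blast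
      qed
    qed
  qed
qed

end
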